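(* Let $p$ be an odd prime and $G$ the non-abelian group of order $p^3$ and exponent $p$. Let $S$ be a sequence over $G$ of length $3p-2$ such that at least $p-2$ terms of $S$ (counted with multiplicity) lie in $Z(G)$. Then $S$ has a non-empty product-one subsequence.
   Context: $G = \langle x, y : x^p = y^p = 1,\ [y,x] \text{ central}\rangle$ is the Heisenberg group of order $p^3$ and exponent $p$, with $Z(G)=[G,G]$ of order $p$. A sequence over $G$ is a finite unordered list (multiset) of elements of $G$; a subsequence is a sub-multiset; a non-empty sequence is product-one if some ordering of its terms has product $1$. *)

theory Defs
  imports "HOL-Algebra.Coset" "HOL-Computational_Algebra.Primes" "HOL-Library.Multiset"
begin

definition group_center :: "('a, 'b) monoid_scheme \<Rightarrow> 'a set" where
  "group_center G = {z \<in> carrier G. \<forall>x \<in> carrier G. z \<otimes>\<^bsub>G\<^esub> x = x \<otimes>\<^bsub>G\<^esub> z}"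

definition list_prod :: "('a, 'b) monoid_scheme \<Rightarrow> 'a list \<Rightarrow> 'a" where
  "list_prod G xs = foldr (\<lambda>x acc. x \<otimes>\<^bsub>G\<^esub> acc) xs \<one>\<^bsub>G\<^esub>"

definition product_one :: "('a, 'b) monoid_scheme \<Rightarrow> 'a multiset \<Rightarrow> bool" where
  "product_one G T \<longleftrightarrow> T \<noteq> {#} \<and> (\<exists>xs. mset xs = T \<and> list_prod G xs = \<one>\<^bsub>G\<^esub>)"

end

theory Submission
  imports Defs "HOL-Algebra.Group_Action" "HOL-Library.FuncSet" "HOL-Number_Theory.Residues"
begin


lemma alt_sum_superset:
  assumes "finite I" "S \<subseteq> I" "S \<noteq> I"
  shows "(\<Sum>J\<in>Pow I. (-1::int)^card J * (if S \<subseteq> J then 1 else 0)) = 0"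
proof -
  obtain x where x: "x \<in> I" "x \<notin> S" using assms by blast
  define I' where "I' = I - {x}"
  have I: "I = insert x I'" "x \<notin> I'" "finite I'" using x assms(1) by (auto simp: I'_def)
  have P: "Pow I = Pow I' \<union> insert x ` Pow I'" by (simp add: Pow_insert I)
  have D: "Pow I' \<inter> insert x ` Pow I' = {}" using I by auto
  have inj: "inj_on (insert x) (Pow I')" using I by (auto simp: inj_on_def)
  let ?f = "\<lambda>J. (-1::int)^card J * (if S \<subseteq> J then 1 else 0)"
  have "(\<Sum>J\<in>Pow I. ?f J) = (\<Sum>J\<in>Pow I'. ?f J) + (\<Sum>J\<in>insert x ` Pow I'. ?f J)"
    unfolding P by (rule sum.union_disjoint) (use I D in auto)
  also have "(\<Sum>J\<in>insert x ` Pow I'. ?f J) = (\<Sum>J\<in>Pow I'. ?f (insert x J))"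
    by (rule sum.reindex[OF inj, unfolded comp_def])
  also have "\<dots> = (\<Sum>J\<in>Pow I'. - ?f J)"
  proof (rule sum.cong[OF refl])
    fix J assume J: "J \<in> Pow I'"
    hence "finite J" "x \<notin> J" using I finite_subset by auto
    hence "card (insert x J) = Suc (card J)" by simp
    moreover have "(S \<subseteq> insert x J) = (S \<subseteq> J)" using x by auto
    ultimately show "?f (insert x J) = - ?f J" by simp
  qed
  finally show ?thesis by (simp add: sum_negf)
qed

lemma VL:
  assumes "finite I" "m < card I"
  shows "(\<Sum>J\<in>Pow I. (-1::int)^card J * (\<Prod>l<m. \<Sum>i\<in>J. W l i)) = 0"
proof -
  let ?F = "PiE {..<m} (\<lambda>_. I)"
  have eq: "(\<Prod>l<m. \<Sum>i\<in>J. W l i) = (\<Sum>f\<in>?F. (\<Prod>l<m. W l (f l)) * (if f ` {..<m} \<subseteq> J then 1 else 0))"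
    if J: "J \<in> Pow I" for J
  proof -
    have "(\<Prod>l<m. \<Sum>i\<in>J. W l i) = (\<Prod>l<m. \<Sum>i\<in>I. if i \<in> J then W l i else 0)"
      using J assms(1) by (intro prod.cong refl) (simp add: sum.If_cases Int_absorb1)
    also have "\<dots> = (\<Sum>f\<in>?F. \<Prod>l<m. if f l \<in> J then W l (f l) else 0)"
      by (rule prod_sum_PiE) (use assms in auto)
    also have "\<dots> = (\<Sum>f\<in>?F. (\<Prod>l<m. W l (f l)) * (if f ` {..<m} \<subseteq> J then 1 else 0))"
    proof (rule sum.cong[OF refl])
      fix f assume "f \<in> ?F"
      show "(\<Prod>l<m. if f l \<in> J then W l (f l) else 0) = (\<Prod>l<m. W l (f l)) * (if f ` {..<m} \<subseteq> J then 1 else 0)"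
      proof (cases "f ` {..<m} \<subseteq> J")
        case True thus ?thesis by (auto intro!: prod.cong)
      next
        case False
        then obtain l where "l < m" "f l \<notin> J" by auto
        thus ?thesis using False by (auto intro!: prod_zero)
      qed
    qed
    finally show ?thesis .
  qed
  have "(\<Sum>J\<in>Pow I. (-1::int)^card J * (\<Prod>l<m. \<Sum>i\<in>J. W l i))
      = (\<Sum>J\<in>Pow I. \<Sum>f\<in>?F. (\<Prod>l<m. W l (f l)) * ((-1::int)^card J * (if f ` {..<m} \<subseteq> J then 1 else 0)))"
    by (intro sum.cong refl) (simp add: eq sum_distrib_left mult_ac)
  also have "\<dots> = (\<Sum>f\<in>?F. (\<Prod>l<m. W l (f l)) * (\<Sum>J\<in>Pow I. (-1::int)^card J * (if f ` {..<m} \<subseteq> J then 1 else 0)))"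
    by (subst sum.swap) (simp add: sum_distrib_left)
  also have "\<dots> = 0"
  proof (rule sum.neutral, rule ballI)
    fix f assume f: "f \<in> ?F"
    have sub: "f ` {..<m} \<subseteq> I" using f by (auto simp: PiE_def Pi_def)
    have "card (f ` {..<m}) \<le> m" using card_image_le[of "{..<m}" f] by simp
    hence "f ` {..<m} \<noteq> I" using assms(2) by auto
    thus "(\<Prod>l<m. W l (f l)) * (\<Sum>J\<in>Pow I. (-1::int)^card J * (if f ` {..<m} \<subseteq> J then 1 else 0)) = 0"
      using alt_sum_superset[OF assms(1) sub] by simp
  qed
  finally show ?thesis .
qed



lemma fermat_int:
  assumes "prime p" "\<not> int p dvd x"
  shows "[x^(p-1) = 1] (mod int p)"
proof -
  define a where "a = nat (x mod int p)"
  have p0: "int p > 0" using assms(1) prime_gt_0_nat by auto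
  have xa: "[x = int a] (mod int p)" using p0 by (simp add: a_def cong_def)
  have "\<not> p dvd a"
  proof
    assume "p dvd a"
    hence "int p dvd int a" by simp
    hence "int p dvd x" using xa by (metis cong_dvd_iff)
    thus False using assms(2) by simp
  qed
  hence "[a^(p-1) = 1] (mod p)" using fermat_theorem[OF assms(1)] by simp
  hence "[int a^(p-1) = 1] (mod int p)" by (metis cong_int_iff of_nat_1 of_nat_power)
  moreover have "[x^(p-1) = int a^(p-1)] (mod int p)" using xa by (rule cong_pow)
  ultimately show ?thesis using cong_trans by blast
qed

lemma prod_lessThan_add:
  "(\<Prod>l<a+b. f l) = (\<Prod>l<a. f l) * (\<Prod>l<b. f (a+l))" for f :: "nat \<Rightarrow> 'a::comm_monoid_mult"
  by (induction b) (auto simp: ac_simps)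

lemma VL3:
  assumes "finite I" "\<alpha> + \<beta> + \<gamma> < card I"
  shows "(\<Sum>J\<in>Pow I. (-1::int)^card J * ((\<Sum>i\<in>J. u i)^\<alpha> * (\<Sum>i\<in>J. v i)^\<beta> * (\<Sum>i\<in>J. w i)^\<gamma>)) = 0"
proof -
  define W where "W = (\<lambda>l. if l < \<alpha> then u else if l < \<alpha> + \<beta> then v else w)"
  have "(\<Prod>l<\<alpha>+\<beta>+\<gamma>. \<Sum>i\<in>J. W l i) = (\<Sum>i\<in>J. u i)^\<alpha> * (\<Sum>i\<in>J. v i)^\<beta> * (\<Sum>i\<in>J. w i)^\<gamma>" for J
    unfolding prod_lessThan_add by (simp add: W_def)
  with VL[OF assms(1), of "\<alpha>+\<beta>+\<gamma>" W] assms(2) show ?thesis by simp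
qed

lemma UVid:
  fixes u v :: "nat \<Rightarrow> int"
  assumes "finite J"
  shows "(\<Sum>i\<in>J. u i) * (\<Sum>i\<in>J. v i) = (\<Sum>j\<in>J. u j * v j + v j * (\<Sum>i\<in>{i\<in>J. i<j}. u i) + u j * (\<Sum>i\<in>{i\<in>J. i<j}. v i))"
  using assms
proof (induction J rule: finite_linorder_max_induct)
  case empty thus ?case by simp
next
  case (insert b A)
  have bA: "b \<notin> A" using insert by auto
  have s1: "{i\<in>insert b A. i<b} = A" using insert by auto
  have s2: "\<And>j. j \<in> A \<Longrightarrow> {i\<in>insert b A. i<j} = {i\<in>A. i<j}" using insert by auto
  have "(\<Sum>j\<in>insert b A. u j * v j + v j * (\<Sum>i\<in>{i\<in>insert b A. i<j}. u i) + u j * (\<Sum>i\<in>{i\<in>insert b A. i<j}. v i))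
     = (u b * v b + v b * (\<Sum>i\<in>A. u i) + u b * (\<Sum>i\<in>A. v i)) +
       (\<Sum>j\<in>A. u j * v j + v j * (\<Sum>i\<in>{i\<in>A. i<j}. u i) + u j * (\<Sum>i\<in>{i\<in>A. i<j}. v i))"
    using insert bA s1 s2 by (simp add: sum.insert)
  also have "\<dots> = (\<Sum>i\<in>insert b A. u i) * (\<Sum>i\<in>insert b A. v i)"
    using insert bA by (simp add: algebra_simps)
  finally show ?case by simp
qed



lemma binom_alt:
  fixes X :: int and M :: "nat set \<Rightarrow> int"
  assumes "finite I"
  shows "(\<Sum>K\<in>Pow I. (-1::int)^card K * (X + M K)^n)
       = (\<Sum>r\<le>n. of_nat (n choose r) * X^(n-r) * (\<Sum>K\<in>Pow I. (-1::int)^card K * M K ^ r))"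
proof -
  have "(\<Sum>K\<in>Pow I. (-1::int)^card K * (X + M K)^n)
      = (\<Sum>K\<in>Pow I. \<Sum>r\<le>n. (-1::int)^card K * (of_nat (n choose r) * M K ^ r * X^(n-r)))"
    by (intro sum.cong refl) (simp add: add.commute[of X] binomial_ring sum_distrib_left)
  also have "\<dots> = (\<Sum>r\<le>n. \<Sum>K\<in>Pow I. (-1::int)^card K * (of_nat (n choose r) * M K ^ r * X^(n-r)))"
    by (rule sum.swap)
  also have "\<dots> = (\<Sum>r\<le>n. of_nat (n choose r) * X^(n-r) * (\<Sum>K\<in>Pow I. (-1::int)^card K * M K ^ r))"
    by (simp add: sum_distrib_left mult_ac)
  finally show ?thesis .
qed

lemma VL1:
  assumes "finite I" "r < card I"
  shows "(\<Sum>K\<in>Pow I. (-1::int)^card K * (\<Sum>i\<in>K. w i)^r) = 0"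
  using VL3[OF assms(1), of 0 0 r] assms(2) by simp

lemma core:
  fixes p nx k :: nat and u v c d :: "nat \<Rightarrow> int"
  assumes p: "prime p" "odd p" and n: "nx + k = 3*p - 2" and k: "p - 2 \<le> k"
  shows "\<exists>J K. J \<subseteq> {..<nx} \<and> K \<subseteq> {..<k} \<and> (J \<noteq> {} \<or> K \<noteq> {}) \<and>
     int p dvd (\<Sum>i\<in>J. u i) \<and> int p dvd (\<Sum>i\<in>J. v i) \<and>
     (int p dvd (\<Sum>j\<in>J. c j + v j * (\<Sum>i\<in>{i\<in>J. i<j}. u i)) + (\<Sum>j\<in>K. d j)
      \<or> int p dvd (\<Sum>j\<in>J. c j + u j * (\<Sum>i\<in>{i\<in>J. i<j}. v i)) + (\<Sum>j\<in>K. d j))"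
proof (rule ccontr)
  assume H: "\<not> ?thesis"
  have Hf: "\<not> int p dvd (\<Sum>j\<in>J. c j + v j * (\<Sum>i\<in>{i\<in>J. i<j}. u i)) + (\<Sum>j\<in>K. d j)"
    and Hr: "\<not> int p dvd (\<Sum>j\<in>J. c j + u j * (\<Sum>i\<in>{i\<in>J. i<j}. v i)) + (\<Sum>j\<in>K. d j)"
    if "J \<subseteq> {..<nx}" "K \<subseteq> {..<k}" "J \<noteq> {} \<or> K \<noteq> {}" "int p dvd (\<Sum>i\<in>J. u i)" "int p dvd (\<Sum>i\<in>J. v i)" for J K
    using H that by blast+
  have p3: "p \<ge> 3" using prime_ge_2_nat[OF p(1)] p(2) by (cases "p = 2") auto
  hence k1: "k \<ge> 1" using k by linarith
  define U where "U J = (\<Sum>i\<in>J. u i)" for J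
  define V where "V J = (\<Sum>i\<in>J. v i)" for J
  define Cf where "Cf J = (\<Sum>j\<in>J. c j + v j * (\<Sum>i\<in>{i\<in>J. i<j}. u i))" for J
  define Cr where "Cr J = (\<Sum>j\<in>J. c j + u j * (\<Sum>i\<in>{i\<in>J. i<j}. v i))" for J
  define L where "L J = (\<Sum>j\<in>J. 2 * c j - u j * v j)" for J
  define M where "M K = (\<Sum>j\<in>K. 2 * d j)" for K
  define Pf where "Pf J = 2 * Cf J - U J * V J" for J
  define Pr where "Pr J = 2 * Cr J - U J * V J" for J
  define E where "E J K = (1 - U J^(p-1)) * (1 - V J^(p-1)) * (2 - (Pf J + M K)^(p-1) - (Pr J + M K)^(p-1))" for J K
  have Msum: "M K = 2 * (\<Sum>j\<in>K. d j)" for K by (simp add: M_def sum_distrib_left)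
  have PP: "Pf J + Pr J = 2 * L J" if "finite J" for J
  proof -
    have "U J * V J = (\<Sum>j\<in>J. u j * v j + v j * (\<Sum>i\<in>{i\<in>J. i<j}. u i) + u j * (\<Sum>i\<in>{i\<in>J. i<j}. v i))"
      unfolding U_def V_def by (rule UVid[OF that])
    hence "Cf J + Cr J - U J * V J = L J"
      unfolding Cf_def Cr_def L_def
      by (simp add: sum.distrib[symmetric] sum_subtractf[symmetric] algebra_simps)
    thus ?thesis unfolding Pf_def Pr_def by (simp add: algebra_simps)
  qed
  have C1: "[E J K = (if J = {} \<and> K = {} then 2 else 0)] (mod int p)"
    if J: "J \<subseteq> {..<nx}" and K: "K \<subseteq> {..<k}" for J K
  proof -
    have pm1: "p - 1 \<ge> 1" using p3 by simp
    show ?thesis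
    proof (cases "int p dvd U J \<and> int p dvd V J")
      case False
      hence ne: "J \<noteq> {}" by (auto simp: U_def V_def)
      from False consider "\<not> int p dvd U J" | "\<not> int p dvd V J" by blast
      thus ?thesis
      proof cases
        case 1
        hence "[1 - U J^(p-1) = 1 - 1] (mod int p)"
          using fermat_int[OF p(1)] by (intro cong_diff cong_refl) auto
        hence "[E J K = (1 - 1) * (1 - V J^(p-1)) * (2 - (Pf J + M K)^(p-1) - (Pr J + M K)^(p-1))] (mod int p)"
          unfolding E_def by (intro cong_mult cong_refl)
        thus ?thesis using ne by simp
      next
        case 2
        hence "[1 - V J^(p-1) = 1 - 1] (mod int p)"
          using fermat_int[OF p(1)] by (intro cong_diff cong_refl) auto
        hence "[E J K = (1 - U J^(p-1)) * (1 - 1) * (2 - (Pf J + M K)^(p-1) - (Pr J + M K)^(p-1))] (mod int p)"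
          unfolding E_def by (intro cong_mult cong_refl)
        thus ?thesis using ne by simp
      qed
    next
      case True
      have z1: "[U J^(p-1) = 0] (mod int p)"
      proof -
        have "U J dvd U J^(p-1)" using pm1 by (intro dvd_power) auto
        thus ?thesis using True unfolding cong_0_iff by (meson dvd_trans)
      qed
      have z2: "[V J^(p-1) = 0] (mod int p)"
      proof -
        have "V J dvd V J^(p-1)" using pm1 by (intro dvd_power) auto
        thus ?thesis using True unfolding cong_0_iff by (meson dvd_trans)
      qed
      have "[E J K = (1 - 0) * (1 - 0) * (2 - (Pf J + M K)^(p-1) - (Pr J + M K)^(p-1))] (mod int p)"
        unfolding E_def by (intro cong_mult cong_diff cong_refl z1 z2)
      hence E1: "[E J K = 2 - (Pf J + M K)^(p-1) - (Pr J + M K)^(p-1)] (mod int p)" by simp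
      show ?thesis
      proof (cases "J = {} \<and> K = {}")
        case True
        have z: "0 < p - Suc 0" using pm1 by simp
        hence "E J K = 2" using True by (simp add: zero_power E_def U_def V_def Pf_def Pr_def M_def Cf_def Cr_def)
        thus ?thesis using True by simp
      next
        case False
        have nd: "\<not> int p dvd Cf J + (\<Sum>j\<in>K. d j)" "\<not> int p dvd Cr J + (\<Sum>j\<in>K. d j)"
          using Hf[OF J K] Hr[OF J K] False True unfolding U_def V_def Cf_def Cr_def by auto
        have odd2: "\<not> int p dvd 2"
        proof
          assume "int p dvd 2" hence "int p \<le> 2" by (rule zdvd_imp_le) simp
          thus False using p3 by simp
        qed
        have primep: "prime (int p)" using p(1) by simp
        have X: "\<not> int p dvd Pf J + M K"
        proof
          assume "int p dvd Pf J + M K"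
          moreover have "2 * (Cf J + (\<Sum>j\<in>K. d j)) = (Pf J + M K) + U J * V J"
            using Msum[of K] by (simp add: Pf_def algebra_simps)
          moreover have "int p dvd U J * V J" using True by simp
          ultimately have "int p dvd 2 * (Cf J + (\<Sum>j\<in>K. d j))"
            by (simp only:) (rule dvd_add)
          thus False using nd(1) odd2 primep by (metis prime_dvd_mult_iff)
        qed
        have Y: "\<not> int p dvd Pr J + M K"
        proof
          assume "int p dvd Pr J + M K"
          moreover have "2 * (Cr J + (\<Sum>j\<in>K. d j)) = (Pr J + M K) + U J * V J"
            using Msum[of K] by (simp add: Pr_def algebra_simps)
          moreover have "int p dvd U J * V J" using True by simp
          ultimately have "int p dvd 2 * (Cr J + (\<Sum>j\<in>K. d j))"
            by (simp only:) (rule dvd_add)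
          thus False using nd(2) odd2 primep by (metis prime_dvd_mult_iff)
        qed
        have "[2 - (Pf J + M K)^(p-1) - (Pr J + M K)^(p-1) = 2 - 1 - 1] (mod int p)"
          by (intro cong_diff cong_refl fermat_int[OF p(1)] X Y)
        hence "[E J K = 0] (mod int p)" using E1 by (simp add: cong_trans)
        moreover have "(if J = {} \<and> K = {} then 2 else (0::int)) = 0" using False by simp
        ultimately show ?thesis by simp
      qed
    qed
  qed
  define SS where "SS F = (\<Sum>J\<in>Pow {..<nx}. \<Sum>K\<in>Pow {..<k}. (-1::int)^(card J + card K) * F J K)" for F :: "nat set \<Rightarrow> nat set \<Rightarrow> int"
  have SS_add: "SS (\<lambda>J K. F J K + G J K) = SS F + SS G" for F G
    unfolding SS_def by (simp add: distrib_left sum.distrib)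
  have SS_diff: "SS (\<lambda>J K. F J K - G J K) = SS F - SS G" for F G
    unfolding SS_def by (simp add: right_diff_distrib sum_subtractf)
  have sK0: "(\<Sum>K\<in>Pow {..<k}. (-1::int)^card K) = 0"
    using VL1[of "{..<k}" 0 "\<lambda>_. 0"] k1 by simp
  have ZT: "SS (\<lambda>J K. U J^\<alpha> * V J^\<beta> * (2 - (Pf J + M K)^(p-1) - (Pr J + M K)^(p-1))) = 0"
    if ab: "\<alpha> \<le> p - 1" "\<beta> \<le> p - 1" for \<alpha> \<beta>
  proof -
    have partA: "SS (\<lambda>J K. 2 * (U J^\<alpha> * V J^\<beta>)) = 0"
    proof -
      have "SS (\<lambda>J K. 2 * (U J^\<alpha> * V J^\<beta>)) =
        (\<Sum>J\<in>Pow {..<nx}. (-1::int)^card J * (2 * (U J^\<alpha> * V J^\<beta>)) * (\<Sum>K\<in>Pow {..<k}. (-1::int)^card K))"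
        unfolding SS_def by (simp add: power_add sum_distrib_left mult_ac)
      thus ?thesis using sK0 by simp
    qed
    have inner: "(\<Sum>K\<in>Pow {..<k}. (-1::int)^card K * ((Pf J + M K)^(p-1) + (Pr J + M K)^(p-1)))
       = (\<Sum>r\<le>p-1. of_nat ((p-1) choose r) * (Pf J^(p-1-r) + Pr J^(p-1-r)) * (\<Sum>K\<in>Pow {..<k}. (-1::int)^card K * M K ^ r))"
      for J
      using binom_alt[of "{..<k}" "Pf J" M "p-1"] binom_alt[of "{..<k}" "Pr J" M "p-1"]
      by (simp add: distrib_left distrib_right sum.distrib)
    have partB: "SS (\<lambda>J K. U J^\<alpha> * V J^\<beta> * ((Pf J + M K)^(p-1) + (Pr J + M K)^(p-1))) = 0"
    proof -
      have "SS (\<lambda>J K. U J^\<alpha> * V J^\<beta> * ((Pf J + M K)^(p-1) + (Pr J + M K)^(p-1)))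
         = (\<Sum>J\<in>Pow {..<nx}. (-1::int)^card J * (U J^\<alpha> * V J^\<beta>) *
              (\<Sum>K\<in>Pow {..<k}. (-1::int)^card K * ((Pf J + M K)^(p-1) + (Pr J + M K)^(p-1))))"
        unfolding SS_def by (simp add: power_add sum_distrib_left mult_ac)
      also have "\<dots> = (\<Sum>J\<in>Pow {..<nx}. \<Sum>r\<le>p-1. (-1::int)^card J * (U J^\<alpha> * V J^\<beta>) *
           (of_nat ((p-1) choose r) * (Pf J^(p-1-r) + Pr J^(p-1-r)) * (\<Sum>K\<in>Pow {..<k}. (-1::int)^card K * M K ^ r)))"
        by (rule sum.cong[OF refl]) (simp only: inner sum_distrib_left)
      also have "\<dots> = (\<Sum>r\<le>p-1. \<Sum>J\<in>Pow {..<nx}. (-1::int)^card J * (U J^\<alpha> * V J^\<beta>) *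
           (of_nat ((p-1) choose r) * (Pf J^(p-1-r) + Pr J^(p-1-r)) * (\<Sum>K\<in>Pow {..<k}. (-1::int)^card K * M K ^ r)))"
        by (rule sum.swap)
      also have "\<dots> = 0"
      proof (rule sum.neutral, rule ballI)
        fix r assume r: "r \<in> {..p-1}"
        show "(\<Sum>J\<in>Pow {..<nx}. (-1::int)^card J * (U J^\<alpha> * V J^\<beta>) *
           (of_nat ((p-1) choose r) * (Pf J^(p-1-r) + Pr J^(p-1-r)) * (\<Sum>K\<in>Pow {..<k}. (-1::int)^card K * M K ^ r))) = 0"
        proof (cases "r < k")
          case True
          have "(\<Sum>K\<in>Pow {..<k}. (-1::int)^card K * M K ^ r) = 0"
            unfolding M_def by (rule VL1) (use True in auto)
          thus ?thesis by simp
        next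
          case False
          define s where "s = p - 1 - r"
          have s1: "s \<le> 1" using False k r unfolding s_def by auto
          have PS: "Pf J^s + Pr J^s = 2 * L J ^ s" if "J \<in> Pow {..<nx}" for J
          proof -
            have "finite J" using that finite_subset by auto
            thus ?thesis using s1 PP by (cases s) auto
          qed
          have lt: "\<alpha> + \<beta> + s < card {..<nx}" using ab s_def False r n k p3 by auto
          have "(\<Sum>J\<in>Pow {..<nx}. (-1::int)^card J * (U J^\<alpha> * V J^\<beta> * L J ^ s)) = 0"
            unfolding U_def V_def L_def by (rule VL3) (use lt in auto)
          moreover have "(\<Sum>J\<in>Pow {..<nx}. (-1::int)^card J * (U J^\<alpha> * V J^\<beta>) * (Pf J^s + Pr J^s))
              = (\<Sum>J\<in>Pow {..<nx}. 2 * ((-1::int)^card J * (U J^\<alpha> * V J^\<beta> * L J ^ s)))"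
            by (rule sum.cong[OF refl]) (simp add: PS mult_ac)
          ultimately have "(\<Sum>J\<in>Pow {..<nx}. (-1::int)^card J * (U J^\<alpha> * V J^\<beta>) * (Pf J^s + Pr J^s)) = 0"
            by (simp add: sum_distrib_left[symmetric])
          hence "(\<Sum>J\<in>Pow {..<nx}. (-1::int)^card J * (U J^\<alpha> * V J^\<beta>) * (Pf J^s + Pr J^s)) *
               (of_nat ((p-1) choose r) * (\<Sum>K\<in>Pow {..<k}. (-1::int)^card K * M K ^ r)) = 0" by simp
          moreover have "(\<Sum>J\<in>Pow {..<nx}. (-1::int)^card J * (U J^\<alpha> * V J^\<beta>) *
           (of_nat ((p-1) choose r) * (Pf J^(p-1-r) + Pr J^(p-1-r)) * (\<Sum>K\<in>Pow {..<k}. (-1::int)^card K * M K ^ r)))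
            = (\<Sum>J\<in>Pow {..<nx}. (-1::int)^card J * (U J^\<alpha> * V J^\<beta>) * (Pf J^s + Pr J^s)) *
               (of_nat ((p-1) choose r) * (\<Sum>K\<in>Pow {..<k}. (-1::int)^card K * M K ^ r))"
            unfolding sum_distrib_right s_def by (rule sum.cong[OF refl]) (simp only: mult_ac)
          ultimately show ?thesis by simp
        qed
      qed
      finally show ?thesis .
    qed
    have "(\<lambda>J K. U J^\<alpha> * V J^\<beta> * (2 - (Pf J + M K)^(p-1) - (Pr J + M K)^(p-1)))
       = (\<lambda>J K. 2 * (U J^\<alpha> * V J^\<beta>) - U J^\<alpha> * V J^\<beta> * ((Pf J + M K)^(p-1) + (Pr J + M K)^(p-1)))"
      by (intro ext) (simp add: algebra_simps)
    hence "SS (\<lambda>J K. U J^\<alpha> * V J^\<beta> * (2 - (Pf J + M K)^(p-1) - (Pr J + M K)^(p-1)))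
       = SS (\<lambda>J K. 2 * (U J^\<alpha> * V J^\<beta>)) - SS (\<lambda>J K. U J^\<alpha> * V J^\<beta> * ((Pf J + M K)^(p-1) + (Pr J + M K)^(p-1)))"
      by (simp only: SS_diff)
    thus ?thesis using partA partB by simp
  qed
  have C2: "SS E = 0"
  proof -
    define T where "T a b J K = U J^a * V J^b * (2 - (Pf J + M K)^(p-1) - (Pr J + M K)^(p-1))" for a b J K
    have "E = (\<lambda>J K. T 0 0 J K - T (p-1) 0 J K - T 0 (p-1) J K + T (p-1) (p-1) J K)"
      unfolding E_def T_def by (intro ext) (simp add: algebra_simps)
    hence "SS E = SS (T 0 0) - SS (T (p-1) 0) - SS (T 0 (p-1)) + SS (T (p-1) (p-1))"
      by (simp only: SS_add SS_diff)
    hence "SS E = SS (\<lambda>J K. U J^0 * V J^0 * (2 - (Pf J + M K)^(p-1) - (Pr J + M K)^(p-1)))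
        - SS (\<lambda>J K. U J^(p-1) * V J^0 * (2 - (Pf J + M K)^(p-1) - (Pr J + M K)^(p-1)))
        - SS (\<lambda>J K. U J^0 * V J^(p-1) * (2 - (Pf J + M K)^(p-1) - (Pr J + M K)^(p-1)))
        + SS (\<lambda>J K. U J^(p-1) * V J^(p-1) * (2 - (Pf J + M K)^(p-1) - (Pr J + M K)^(p-1)))"
      unfolding T_def by (simp only: )
    thus ?thesis using ZT[of 0 0] ZT[of "p-1" 0] ZT[of 0 "p-1"] ZT[of "p-1" "p-1"] by simp
  qed
  have "[SS E = SS (\<lambda>J K. if J = {} \<and> K = {} then 2 else 0)] (mod int p)"
    unfolding SS_def by (intro cong_sum cong_mult cong_refl C1) auto
  moreover have "SS (\<lambda>J K. if J = {} \<and> K = {} then 2 else 0) = 2"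
  proof -
    have "SS (\<lambda>J K. if J = {} \<and> K = {} then 2 else 0) =
          (\<Sum>J\<in>Pow {..<nx}. if J = {} then 2 else 0)"
      unfolding SS_def
    proof (intro sum.cong refl)
      fix J show "(\<Sum>K\<in>Pow {..<k}. (-1::int)^(card J + card K) * (if J = {} \<and> K = {} then 2 else 0)) = (if J = {} then 2 else 0)"
        by (cases "J = {}") (simp_all add: if_distrib sum.delta cong: if_cong)
    qed
    also have "\<dots> = 2" by (simp add: sum.delta')
    finally show ?thesis .
  qed
  ultimately have "[0 = 2] (mod int p)" using C2 by simp
  hence "int p dvd 2" by (metis cong_0_iff cong_sym)
  hence "p dvd 2" by presburger
  hence "p \<le> 2" by (rule dvd_imp_le) simp
  thus False using p3 by simp
qed



context group
begin

lemma inv_cancel_l [simp]: "g \<in> carrier G \<Longrightarrow> x \<in> carrier G \<Longrightarrow> inv g \<otimes> (g \<otimes> x) = x"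
  by (simp add: m_assoc[symmetric])
lemma inv_cancel_l2 [simp]: "g \<in> carrier G \<Longrightarrow> x \<in> carrier G \<Longrightarrow> g \<otimes> (inv g \<otimes> x) = x"
  by (simp add: m_assoc[symmetric])

lemma center_sub: "subgroup (group_center G) G"
proof (rule subgroupI)
  show "group_center G \<subseteq> carrier G" by (auto simp: group_center_def)
  show "group_center G \<noteq> {}" by (auto simp: group_center_def intro!: exI[of _ \<one>])
  fix a assume a: "a \<in> group_center G"
  hence ac: "a \<in> carrier G" and ax: "\<And>x. x \<in> carrier G \<Longrightarrow> a \<otimes> x = x \<otimes> a" by (auto simp: group_center_def)
  show "inv a \<in> group_center G" unfolding group_center_def
  proof (intro CollectI conjI ballI)
    show "inv a \<in> carrier G" using ac by simp
    fix x assume x: "x \<in> carrier G"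
    have "inv a \<otimes> x = inv a \<otimes> (x \<otimes> a) \<otimes> inv a" using ac x by (simp add: m_assoc)
    also have "\<dots> = inv a \<otimes> (a \<otimes> x) \<otimes> inv a" using ax[OF x] by simp
    also have "\<dots> = x \<otimes> inv a" using ac x by simp
    finally show "inv a \<otimes> x = x \<otimes> inv a" .
  qed
  fix b assume b: "b \<in> group_center G"
  hence bc: "b \<in> carrier G" and bx: "\<And>x. x \<in> carrier G \<Longrightarrow> b \<otimes> x = x \<otimes> b" by (auto simp: group_center_def)
  show "a \<otimes> b \<in> group_center G" unfolding group_center_def
  proof (intro CollectI conjI ballI)
    show "a \<otimes> b \<in> carrier G" using ac bc by simp
    fix x assume x: "x \<in> carrier G"
    have "a \<otimes> b \<otimes> x = a \<otimes> (b \<otimes> x)" using ac bc x by (simp add: m_assoc)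
    also have "\<dots> = a \<otimes> (x \<otimes> b)" using bx[OF x] by simp
    also have "\<dots> = (a \<otimes> x) \<otimes> b" using ac bc x by (simp add: m_assoc)
    also have "\<dots> = (x \<otimes> a) \<otimes> b" using ax[OF x] by simp
    also have "\<dots> = x \<otimes> (a \<otimes> b)" using ac bc x by (simp add: m_assoc)
    finally show "a \<otimes> b \<otimes> x = x \<otimes> (a \<otimes> b)" .
  qed
qed

lemma centr_sub:
  assumes g: "g \<in> carrier G"
  shows "subgroup {h \<in> carrier G. h \<otimes> g = g \<otimes> h} G"
proof (rule subgroupI)
  show "{h \<in> carrier G. h \<otimes> g = g \<otimes> h} \<subseteq> carrier G" by auto
  show "{h \<in> carrier G. h \<otimes> g = g \<otimes> h} \<noteq> {}" using g by (auto intro!: exI[of _ \<one>])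
  fix a assume a: "a \<in> {h \<in> carrier G. h \<otimes> g = g \<otimes> h}"
  hence ac: "a \<in> carrier G" and ag: "a \<otimes> g = g \<otimes> a" by auto
  have "inv a \<otimes> g = inv a \<otimes> (g \<otimes> a) \<otimes> inv a" using ac g by (simp add: m_assoc)
  also have "\<dots> = inv a \<otimes> (a \<otimes> g) \<otimes> inv a" using ag by simp
  also have "\<dots> = g \<otimes> inv a" using ac g by simp
  finally show "inv a \<in> {h \<in> carrier G. h \<otimes> g = g \<otimes> h}" using ac by simp
  fix b assume "b \<in> {h \<in> carrier G. h \<otimes> g = g \<otimes> h}"
  hence bc: "b \<in> carrier G" and bg: "b \<otimes> g = g \<otimes> b" by auto
  have "a \<otimes> b \<otimes> g = a \<otimes> (b \<otimes> g)" using ac bc g by (simp add: m_assoc)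
  also have "\<dots> = a \<otimes> (g \<otimes> b)" using bg by simp
  also have "\<dots> = (a \<otimes> g) \<otimes> b" using ac bc g by (simp add: m_assoc)
  also have "\<dots> = (g \<otimes> a) \<otimes> b" using ag by simp
  also have "\<dots> = g \<otimes> (a \<otimes> b)" using ac bc g by (simp add: m_assoc)
  finally show "a \<otimes> b \<in> {h \<in> carrier G. h \<otimes> g = g \<otimes> h}" using ac bc by simp
qed

lemma card_sub_dvd:
  assumes "subgroup H G"
  shows "card H dvd order G"
proof -
  have "order G = card (rcosets H) * card H" using lagrange[OF assms] by simp
  thus ?thesis by simp
qed

lemma class_eq:
  assumes fin: "finite (carrier G)" and p: "prime p" and ord: "order G = p^n" and n: "n \<ge> 1"
  shows "p dvd card (group_center G)"
proof -
  let ?\<phi> = "\<lambda>g. (\<lambda>h \<in> carrier G. g \<otimes> h \<otimes> inv g)"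
  interpret A: group_action G "carrier G" ?\<phi> by (rule action_by_conjugation)
  let ?Z = "group_center G"
  have Zc: "?Z \<subseteq> carrier G" by (auto simp: group_center_def)
  have orbZ: "orbit G ?\<phi> x = {x}" if x: "x \<in> ?Z" for x
  proof -
    have xc: "x \<in> carrier G" and xx: "\<And>g. g \<in> carrier G \<Longrightarrow> x \<otimes> g = g \<otimes> x" using x by (auto simp: group_center_def)
    have "g \<otimes> x \<otimes> inv g = x" if g: "g \<in> carrier G" for g
    proof -
      have "g \<otimes> x \<otimes> inv g = x \<otimes> g \<otimes> inv g" using xx[OF g] by simp
      also have "\<dots> = x" using g xc by (simp add: m_assoc)
      finally show ?thesis .
    qed
    thus ?thesis using xc unfolding orbit_def by force
  qed
  have orbnZ: "y \<notin> ?Z" if x: "x \<in> carrier G" "x \<notin> ?Z" and y: "y \<in> orbit G ?\<phi> x" for x y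
  proof
    assume yZ: "y \<in> ?Z"
    obtain g where g: "g \<in> carrier G" "y = g \<otimes> x \<otimes> inv g" using y x unfolding orbit_def by auto
    have yc: "y \<in> carrier G" and yy: "\<And>h. h \<in> carrier G \<Longrightarrow> y \<otimes> h = h \<otimes> y" using yZ by (auto simp: group_center_def)
    have "x = inv g \<otimes> y \<otimes> g" using g x by (simp add: m_assoc)
    also have "\<dots> = inv g \<otimes> (y \<otimes> g)" using g yc by (simp add: m_assoc)
    also have "\<dots> = y" using yy[of g] g yc by simp
    finally show False using yZ x by simp
  qed
  have card_orb: "p dvd card (orbit G ?\<phi> x)" if x: "x \<in> carrier G" "x \<notin> ?Z" for x
  proof -
    have "p^n = card (orbit G ?\<phi> x) * card (stabilizer G ?\<phi> x)"
      using A.orbit_stabilizer_theorem[OF x(1)] ord by simp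
    hence "card (orbit G ?\<phi> x) dvd p^n" by simp
    then obtain i where i: "card (orbit G ?\<phi> x) = p^i" using divides_primepow_nat[OF p] by blast
    show ?thesis
    proof (cases i)
      case 0
      hence c1: "card (orbit G ?\<phi> x) = 1" using i by simp
      have xo: "x \<in> orbit G ?\<phi> x" using A.orbit_refl[OF x(1)] .
      have oe: "orbit G ?\<phi> x = {x}"
      proof -
        obtain a where "orbit G ?\<phi> x = {a}" using c1 card_1_singletonE by blast
        thus ?thesis using xo by simp
      qed
      have "x \<in> ?Z" unfolding group_center_def
      proof (intro CollectI conjI ballI)
        show "x \<in> carrier G" by fact
        fix g assume g: "g \<in> carrier G"
        have "g \<otimes> x \<otimes> inv g \<in> orbit G ?\<phi> x" using g x unfolding orbit_def by force
        hence e: "g \<otimes> x \<otimes> inv g = x" using oe by simp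
        have "g \<otimes> x = g \<otimes> x \<otimes> inv g \<otimes> g" using g x by (simp add: m_assoc)
        thus "x \<otimes> g = g \<otimes> x" using e by simp
      qed
      thus ?thesis using x by simp
    next
      case (Suc j) thus ?thesis using i by simp
    qed
  qed
  define f where "f x = (if x \<in> ?Z then 0 else 1::nat)" for x
  have S1: "(\<Sum>orb\<in>orbits G (carrier G) ?\<phi>. \<Sum>x\<in>orb. f x) = (\<Sum>x\<in>carrier G. f x)"
    by (rule A.disjoint_sum[OF fin])
  have S2: "p dvd (\<Sum>orb\<in>orbits G (carrier G) ?\<phi>. \<Sum>x\<in>orb. f x)"
  proof (rule dvd_sum)
    fix orb assume "orb \<in> orbits G (carrier G) ?\<phi>"
    then obtain x where x: "x \<in> carrier G" and o: "orb = orbit G ?\<phi> x" unfolding orbits_def by auto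
    show "p dvd (\<Sum>x\<in>orb. f x)"
    proof (cases "x \<in> ?Z")
      case True thus ?thesis using o orbZ by (simp add: f_def)
    next
      case False
      have "(\<Sum>x\<in>orb. f x) = (\<Sum>x\<in>orb. 1)" using orbnZ[OF x False] o by (intro sum.cong) (auto simp: f_def)
      thus ?thesis using card_orb[OF x False] o by simp
    qed
  qed
  have S3: "(\<Sum>x\<in>carrier G. f x) = card (carrier G - ?Z)"
  proof -
    have "(\<Sum>x\<in>carrier G. f x) = (\<Sum>x\<in>carrier G - ?Z. 1)"
      unfolding f_def using fin by (simp add: sum.If_cases Diff_eq)
    thus ?thesis by simp
  qed
  have S4: "card (carrier G - ?Z) = card (carrier G) - card ?Z"
    using fin Zc by (simp add: card_Diff_subset finite_subset)
  have S5: "card ?Z \<le> card (carrier G)" using fin Zc by (simp add: card_mono)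
  have S6: "p dvd card (carrier G)" using ord n by (simp add: order_def dvd_power)
  have "p dvd card (carrier G) - card ?Z" using S1 S2 S3 S4 by simp
  hence "p dvd card (carrier G) - (card (carrier G) - card ?Z)" using S6 by (simp add: dvd_diff_nat)
  thus ?thesis using S5 by simp
qed

lemma center_not_index:
  assumes fin: "finite (carrier G)" and p: "prime p" and ord: "order G = p^m"
    and c: "card (group_center G) * p = order G"
  shows False
proof -
  let ?Z = "group_center G"
  have Zc: "?Z \<subseteq> carrier G" by (auto simp: group_center_def)
  have p1: "p > 1" using p prime_gt_1_nat by blast
  have cpos: "card (carrier G) > 0" using fin by (auto simp: card_gt_0_iff)
  have cZ: "card ?Z * p = card (carrier G)" using c by (simp add: order_def)
  have "card ?Z \<noteq> 0"
  proof
    assume "card ?Z = 0" hence "card (carrier G) = 0" using cZ by simp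
    thus False using cpos by simp
  qed
  hence "card ?Z < card (carrier G)" using cZ p1 by (metis mult.right_neutral mult_less_cancel1 neq0_conv)
  moreover have "carrier G \<subseteq> ?Z \<Longrightarrow> card (carrier G) \<le> card ?Z" using fin Zc by (simp add: card_mono finite_subset)
  ultimately obtain g where g: "g \<in> carrier G" "g \<notin> ?Z" by force
  let ?C = "{h \<in> carrier G. h \<otimes> g = g \<otimes> h}"
  have ZC: "?Z \<subseteq> ?C" using g by (auto simp: group_center_def)
  have gC: "g \<in> ?C" using g by simp
  have lt: "card ?Z < card ?C"
    using ZC gC g fin by (intro psubset_card_mono) (auto intro: finite_subset)
  have "card ?C dvd p^m" using card_sub_dvd[OF centr_sub[OF g(1)]] ord by simp
  then obtain i where i: "card ?C = p^i" "i \<le> m" using divides_primepow_nat[OF p] by blast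
  have "\<not> i < m"
  proof
    assume "i < m"
    hence "p^(Suc i) \<le> p^m" using p1 by (intro power_increasing) auto
    hence "card ?C * p \<le> card ?Z * p" using i cZ ord by (simp add: order_def mult.commute)
    hence "card ?C \<le> card ?Z" using p1 by simp
    thus False using lt by simp
  qed
  hence "i = m" using i by simp
  hence "card ?C = card (carrier G)" using i ord by (simp add: order_def)
  hence "?C = carrier G" using fin by (intro card_subset_eq) auto
  hence "\<forall>h\<in>carrier G. h \<otimes> g = g \<otimes> h" by (auto simp: set_eq_iff)
  hence "g \<in> ?Z" using g(1) by (auto simp: group_center_def)
  thus False using g by simp
qed

lemma comm_p2:
  assumes fin: "finite (carrier G)" and p: "prime p" and ord: "order G = p^2"
    and x: "x \<in> carrier G" and y: "y \<in> carrier G"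
  shows "x \<otimes> y = y \<otimes> x"
proof -
  let ?Z = "group_center G"
  have Zc: "?Z \<subseteq> carrier G" by (auto simp: group_center_def)
  have pd: "p dvd card ?Z" using class_eq[OF fin p ord] by simp
  have "card ?Z dvd p^2" using card_sub_dvd[OF center_sub] ord by simp
  then obtain i where i: "card ?Z = p^i" "i \<le> 2" using divides_primepow_nat[OF p] by blast
  have "i \<noteq> 0"
  proof
    assume "i = 0" hence "p dvd 1" using pd i by simp
    thus False using p by auto
  qed
  moreover have "i \<noteq> 1"
  proof
    assume "i = 1"
    hence "card ?Z * p = order G" using i ord by (simp add: power2_eq_square)
    thus False using center_not_index[OF fin p ord] by simp
  qed
  ultimately have "i = 2" using i by linarith
  hence "card ?Z = card (carrier G)" using i ord by (simp add: order_def)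
  hence "?Z = carrier G" using fin Zc by (intro card_subset_eq) auto
  thus ?thesis using x y by (auto simp: group_center_def)
qed

end



locale heis = group G for G (structure) +
  fixes p x y z
  assumes p: "prime p" and fin: "finite (carrier G)" and ordG: "order G = p^3"
    and xc: "x \<in> carrier G" and yc: "y \<in> carrier G" and zc: "z \<in> carrier G"
    and zcent: "\<And>g. g \<in> carrier G \<Longrightarrow> z \<otimes> g = g \<otimes> z"
    and z1: "z \<noteq> \<one>" and yx: "y \<otimes> x = x \<otimes> y \<otimes> z"
    and expo: "\<And>g. g \<in> carrier G \<Longrightarrow> g [^] p = \<one>"
begin

definition nf :: "nat \<Rightarrow> nat \<Rightarrow> nat \<Rightarrow> 'a" where
  "nf a b c = x [^] a \<otimes> y [^] b \<otimes> z [^] c"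

lemma nf_closed [simp]: "nf a b c \<in> carrier G"
  using xc yc zc by (simp add: nf_def)

lemma zpow_comm: "g \<in> carrier G \<Longrightarrow> z [^] (c::nat) \<otimes> g = g \<otimes> z [^] c"
proof (induction c)
  case 0 thus ?case by simp
next
  case (Suc c)
  have "z [^] Suc c \<otimes> g = z [^] c \<otimes> (z \<otimes> g)" using Suc.prems zc by (simp add: m_assoc)
  also have "\<dots> = z [^] c \<otimes> (g \<otimes> z)" using zcent Suc.prems by simp
  also have "\<dots> = (z [^] c \<otimes> g) \<otimes> z" using Suc.prems zc by (simp add: m_assoc)
  also have "\<dots> = (g \<otimes> z [^] c) \<otimes> z" using Suc.IH Suc.prems by simp
  also have "\<dots> = g \<otimes> z [^] Suc c" using Suc.prems zc by (simp add: m_assoc)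
  finally show ?case .
qed

lemma pw1: "y \<otimes> x [^] (a::nat) = x [^] a \<otimes> y \<otimes> z [^] a"
proof (induction a)
  case 0 thus ?case using yc by simp
next
  case (Suc a)
  have "y \<otimes> x [^] Suc a = (y \<otimes> x [^] a) \<otimes> x" using xc yc by (simp add: m_assoc)
  also have "\<dots> = x [^] a \<otimes> y \<otimes> (z [^] a \<otimes> x)" using Suc xc yc zc by (simp add: m_assoc)
  also have "\<dots> = x [^] a \<otimes> y \<otimes> (x \<otimes> z [^] a)" using zpow_comm[OF xc] by simp
  also have "\<dots> = x [^] a \<otimes> (y \<otimes> x) \<otimes> z [^] a" using xc yc zc by (simp add: m_assoc)
  also have "\<dots> = x [^] a \<otimes> (x \<otimes> y \<otimes> z) \<otimes> z [^] a" using yx by simp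
  also have "\<dots> = (x [^] a \<otimes> x) \<otimes> y \<otimes> (z \<otimes> z [^] a)" using xc yc zc by (simp add: m_assoc)
  also have "\<dots> = x [^] Suc a \<otimes> y \<otimes> z [^] Suc a" using zpow_comm[OF zc, of a] by simp
  finally show ?case .
qed

lemma pw2: "y [^] (b::nat) \<otimes> x [^] (a::nat) = x [^] a \<otimes> y [^] b \<otimes> z [^] (a * b)"
proof (induction b)
  case 0 thus ?case using xc by simp
next
  case (Suc b)
  have "y [^] Suc b \<otimes> x [^] a = y [^] b \<otimes> (y \<otimes> x [^] a)" using xc yc by (simp add: m_assoc)
  also have "\<dots> = (y [^] b \<otimes> x [^] a) \<otimes> y \<otimes> z [^] a" using xc yc zc by (simp add: pw1 m_assoc)
  also have "\<dots> = x [^] a \<otimes> y [^] b \<otimes> (z [^] (a * b) \<otimes> y) \<otimes> z [^] a" using Suc xc yc zc by (simp add: m_assoc)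
  also have "\<dots> = x [^] a \<otimes> y [^] b \<otimes> (y \<otimes> z [^] (a * b)) \<otimes> z [^] a" using zpow_comm[OF yc] by simp
  also have "\<dots> = x [^] a \<otimes> (y [^] b \<otimes> y) \<otimes> (z [^] (a * b) \<otimes> z [^] a)" using xc yc zc by (simp add: m_assoc)
  also have "\<dots> = x [^] a \<otimes> y [^] Suc b \<otimes> z [^] (a * Suc b)" using zc by (simp add: nat_pow_mult add.commute)
  finally show ?case .
qed

lemma nf_mult: "nf a b c \<otimes> nf a' b' c' = nf (a + a') (b + b') (c + c' + b * a')"
proof -
  have "nf a b c \<otimes> nf a' b' c' = x [^] a \<otimes> y [^] b \<otimes> (z [^] c \<otimes> (x [^] a' \<otimes> y [^] b')) \<otimes> z [^] c'"
    using xc yc zc by (simp add: nf_def m_assoc)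
  also have "\<dots> = x [^] a \<otimes> y [^] b \<otimes> ((x [^] a' \<otimes> y [^] b') \<otimes> z [^] c) \<otimes> z [^] c'"
    using xc yc by (simp add: zpow_comm)
  also have "\<dots> = x [^] a \<otimes> (y [^] b \<otimes> x [^] a') \<otimes> y [^] b' \<otimes> (z [^] c \<otimes> z [^] c')"
    using xc yc zc by (simp add: m_assoc)
  also have "\<dots> = x [^] a \<otimes> x [^] a' \<otimes> y [^] b \<otimes> (z [^] (a' * b) \<otimes> y [^] b') \<otimes> (z [^] c \<otimes> z [^] c')"
    using xc yc zc by (simp add: pw2 m_assoc)
  also have "\<dots> = x [^] a \<otimes> x [^] a' \<otimes> y [^] b \<otimes> (y [^] b' \<otimes> z [^] (a' * b)) \<otimes> (z [^] c \<otimes> z [^] c')"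
    using yc by (simp add: zpow_comm)
  also have "\<dots> = (x [^] a \<otimes> x [^] a') \<otimes> (y [^] b \<otimes> y [^] b') \<otimes> (z [^] (a' * b) \<otimes> (z [^] c \<otimes> z [^] c'))"
    using xc yc zc by (simp add: m_assoc)
  also have "\<dots> = nf (a + a') (b + b') (c + c' + b * a')"
    using xc yc zc by (simp add: nat_pow_mult nf_def mult.commute add.commute add.left_commute)
  finally show ?thesis .
qed

lemma nf_z: "nf a b c \<otimes> z [^] (d::nat) = nf a b (c + d)"
  using xc yc zc by (simp add: nf_def m_assoc nat_pow_mult)

lemma nf_y: "nf 0 1 0 = y" using yc by (simp add: nf_def)
lemma nf_x: "nf 1 0 0 = x" using xc by (simp add: nf_def)
lemma nf_zz: "nf 0 0 c = z [^] c" using zc by (simp add: nf_def)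

lemma yg: "y \<otimes> nf a b c = nf a b c \<otimes> y \<otimes> z [^] a"
proof -
  have "y \<otimes> nf a b c = nf a (b + 1) (c + a)" using nf_mult[of 0 1 0 a b c] nf_y by (simp add: add.commute)
  moreover have "nf a b c \<otimes> y = nf a (b + 1) c" using nf_mult[of a b c 0 1 0] nf_y by simp
  ultimately show ?thesis using nf_z by simp
qed

lemma gx: "nf a b c \<otimes> x = x \<otimes> nf a b c \<otimes> z [^] b"
proof -
  have "nf a b c \<otimes> x = nf (a + 1) b (c + b)" using nf_mult[of a b c 1 0 0] nf_x by simp
  moreover have "x \<otimes> nf a b c = nf (a + 1) b c" using nf_mult[of 1 0 0 a b c] nf_x by (simp add: add.commute)
  ultimately show ?thesis using nf_z by simp
qed

lemma lcancel: "a \<in> carrier G \<Longrightarrow> b \<in> carrier G \<Longrightarrow> c \<in> carrier G \<Longrightarrow> a \<otimes> b = a \<otimes> c \<Longrightarrow> b = c"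
  by simp

lemma idem_one:
  assumes "a \<in> carrier G" "c \<in> carrier G" "a = a \<otimes> c" shows "c = \<one>"
proof -
  have "a \<otimes> c = a \<otimes> \<one>" using assms(1) assms(3)[symmetric] by simp
  thus ?thesis using assms(1,2) by simp
qed

lemma p1: "p > 1" using p prime_gt_1_nat by blast

lemma zk1: assumes "0 < k" "k < p" shows "z [^] (k::nat) \<noteq> \<one>"
proof
  assume zk: "z [^] k = \<one>"
  have "\<not> p dvd k" using assms by (auto dest: dvd_imp_le)
  hence "coprime p k" using prime_imp_coprime[OF p] by blast
  hence "coprime k p" by (simp add: coprime_commute)
  then obtain u v where uv: "k * u = p * v + 1" using bezout_nat[of k p] assms by (auto simp: coprime_iff_gcd_eq_1)
  have "z [^] (k * u) = \<one>" using zk zc by (simp add: nat_pow_pow[symmetric])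
  moreover have "z [^] (p * v + 1) = z" using zc expo[OF zc] by (simp add: nat_pow_mult[symmetric] nat_pow_pow[symmetric])
  ultimately show False using uv z1 by simp
qed

lemma zpow_inj: assumes "i < p" "j < p" "z [^] (i::nat) = z [^] (j::nat)" shows "i = j"
proof (rule ccontr)
  assume ne: "i \<noteq> j"
  have main: False if "a < b" "b < p" "z [^] a = z [^] b" for a b
  proof -
    have "z [^] a \<otimes> z [^] (b - a) = z [^] b" using zc nat_pow_mult[of z a "b - a"] that by simp
    also have "\<dots> = z [^] a \<otimes> \<one>" using that zc by simp
    finally have "z [^] a \<otimes> z [^] (b - a) = z [^] a \<otimes> \<one>" .
    hence "z [^] (b - a) = \<one>" by (rule lcancel[rotated 3]) (use zc in auto)
    thus False using zk1[of "b - a"] that by simp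
  qed
  show False using ne assms main[of i j] main[of j i] by (cases "i < j") auto
qed

lemma nf_inj:
  assumes "a < p" "b < p" "c < p" "a' < p" "b' < p" "c' < p" "nf a b c = nf a' b' c'"
  shows "a = a' \<and> b = b' \<and> c = c'"
proof -
  have "nf a b c \<otimes> y \<otimes> z [^] a = y \<otimes> nf a b c" using yg[of a b c] by simp
  also have "\<dots> = y \<otimes> nf a' b' c'" using assms(7) by simp
  also have "\<dots> = nf a' b' c' \<otimes> y \<otimes> z [^] a'" using yg[of a' b' c'] by simp
  also have "\<dots> = nf a b c \<otimes> y \<otimes> z [^] a'" using assms(7) by simp
  finally have "nf a b c \<otimes> y \<otimes> z [^] a = nf a b c \<otimes> y \<otimes> z [^] a'" .
  hence "z [^] a = z [^] a'" using yc zc by (simp add: m_assoc)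
  hence A: "a = a'" using zpow_inj assms by blast
  have "x \<otimes> nf a b c \<otimes> z [^] b = nf a b c \<otimes> x" using gx[of a b c] by simp
  also have "\<dots> = nf a' b' c' \<otimes> x" using assms(7) by simp
  also have "\<dots> = x \<otimes> nf a' b' c' \<otimes> z [^] b'" using gx[of a' b' c'] by simp
  also have "\<dots> = x \<otimes> nf a b c \<otimes> z [^] b'" using assms(7) by simp
  finally have "x \<otimes> nf a b c \<otimes> z [^] b = x \<otimes> nf a b c \<otimes> z [^] b'" .
  hence "z [^] b = z [^] b'" using xc zc by (simp add: m_assoc)
  hence B: "b = b'" using zpow_inj assms by blast
  have "(x [^] a \<otimes> y [^] b) \<otimes> z [^] c = (x [^] a \<otimes> y [^] b) \<otimes> z [^] c'"
    using assms(7) A B by (simp add: nf_def)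
  hence "z [^] c = z [^] c'" by (rule lcancel[rotated 3]) (use xc yc zc in auto)
  hence "c = c'" using zpow_inj assms by blast
  thus ?thesis using A B by simp
qed

lemma nf_surj:
  assumes g: "g \<in> carrier G"
  shows "\<exists>a b c. a < p \<and> b < p \<and> c < p \<and> g = nf a b c"
proof -
  let ?D = "{..<p} \<times> {..<p} \<times> {..<p}"
  let ?f = "\<lambda>(a, b, c). nf a b c"
  have inj: "inj_on ?f ?D"
  proof (rule inj_onI)
    fix u w assume u: "u \<in> ?D" and w: "w \<in> ?D" and e: "?f u = ?f w"
    obtain a b c where u': "u = (a, b, c)" using prod_cases3 by blast
    obtain a' b' c' where w': "w = (a', b', c')" using prod_cases3 by blast
    have "a < p" "b < p" "c < p" "a' < p" "b' < p" "c' < p" using u w u' w' by auto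
    moreover have "nf a b c = nf a' b' c'" using e u' w' by simp
    ultimately have "a = a' \<and> b = b' \<and> c = c'" by (rule nf_inj)
    thus "u = w" using u' w' by simp
  qed
  have "card (?f ` ?D) = p^3" using card_image[OF inj] by (simp add: card_cartesian_product power3_eq_cube)
  moreover have sub: "?f ` ?D \<subseteq> carrier G" by auto
  ultimately have "?f ` ?D = carrier G" using fin ordG by (intro card_subset_eq) (auto simp: order_def)
  hence "g \<in> ?f ` ?D" using g by simp
  thus ?thesis by auto
qed

lemma central_nf:
  assumes g: "g \<in> carrier G" and cg: "\<And>h. h \<in> carrier G \<Longrightarrow> g \<otimes> h = h \<otimes> g"
  shows "\<exists>c::nat. g = z [^] c"
proof -
  obtain a b c where abc: "a < p" "b < p" "c < p" "g = nf a b c" using nf_surj[OF g] by blast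
  have e1: "g \<otimes> x = x \<otimes> g \<otimes> z [^] b" using gx[of a b c] abc(4) by simp
  have "x \<otimes> g = x \<otimes> g \<otimes> z [^] b" using cg[OF xc] e1 by (rule trans[OF sym])
  hence "z [^] b = \<one>" by (rule idem_one[rotated 2]) (use xc g zc in auto)
  hence "z [^] b = z [^] (0::nat)" by simp
  hence b0: "b = 0" using zpow_inj[of b 0] abc p1 by simp
  have e2: "y \<otimes> g = g \<otimes> y \<otimes> z [^] a" using yg[of a b c] abc(4) by simp
  have "g \<otimes> y = g \<otimes> y \<otimes> z [^] a" using cg[OF yc] e2 by (rule trans)
  hence "z [^] a = \<one>" by (rule idem_one[rotated 2]) (use yc g zc in auto)
  hence "z [^] a = z [^] (0::nat)" by simp
  hence a0: "a = 0" using zpow_inj[of a 0] abc p1 by simp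
  show ?thesis using abc a0 b0 nf_zz[of c] by blast
qed

lemma pow_p_mult: "g \<in> carrier G \<Longrightarrow> p dvd n \<Longrightarrow> g [^] (n::nat) = \<one>"
  using expo by (auto simp: nat_pow_pow[symmetric])

end



lemma (in group) heis_exists:
  assumes fin: "finite (carrier G)" and p: "prime p" and ord: "order G = p^3"
    and nc: "\<exists>x \<in> carrier G. \<exists>y \<in> carrier G. x \<otimes> y \<noteq> y \<otimes> x"
  shows "\<exists>x y z. x \<in> carrier G \<and> y \<in> carrier G \<and> z \<in> carrier G \<and>
     (\<forall>g\<in>carrier G. z \<otimes> g = g \<otimes> z) \<and> z \<noteq> \<one> \<and> y \<otimes> x = x \<otimes> y \<otimes> z"
proof -
  let ?Z = "group_center G"
  have Zc: "?Z \<subseteq> carrier G" by (auto simp: group_center_def)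
  obtain x y where xy: "x \<in> carrier G" "y \<in> carrier G" "x \<otimes> y \<noteq> y \<otimes> x" using nc by blast
  have pd: "p dvd card ?Z" using class_eq[OF fin p ord] by simp
  have "card ?Z dvd p^3" using card_sub_dvd[OF center_sub] ord by simp
  then obtain i where i: "card ?Z = p^i" "i \<le> 3" using divides_primepow_nat[OF p] by blast
  have "i \<noteq> 0"
  proof
    assume "i = 0" hence "p dvd 1" using pd i by simp
    thus False using p by auto
  qed
  moreover have "i \<noteq> 2"
  proof
    assume "i = 2"
    hence "card ?Z * p = order G" using i ord by (simp add: power2_eq_square power3_eq_cube)
    thus False using center_not_index[OF fin p ord] by simp
  qed
  moreover have "i \<noteq> 3"
  proof
    assume "i = 3"
    hence "card ?Z = card (carrier G)" using i ord by (simp add: order_def)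
    hence "?Z = carrier G" using fin Zc by (intro card_subset_eq) auto
    thus False using xy by (auto simp: group_center_def)
  qed
  ultimately have i1: "i = 1" using i by linarith
  have nZ: "normal ?Z G"
  proof (rule normalI[OF center_sub], rule ballI)
    fix g assume g: "g \<in> carrier G"
    show "?Z #> g = g <# ?Z"
      unfolding r_coset_def l_coset_def using g by (intro SUP_cong refl) (simp add: group_center_def)
  qed
  interpret N: normal ?Z G by (rule nZ)
  have QG: "group (G Mod ?Z)" by (rule N.factorgroup_is_group)
  have "card (rcosets ?Z) * card ?Z = order G" by (rule lagrange[OF center_sub])
  hence "card (rcosets ?Z) * p = p^3" using i i1 ord by simp
  hence cQ: "card (rcosets ?Z) = p^2" using p by (simp add: power3_eq_cube power2_eq_square prime_gt_0_nat)
  have ordQ: "order (G Mod ?Z) = p^2" using cQ by (simp add: order_def FactGroup_def)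
  have "card (rcosets ?Z) > 0" using cQ p prime_gt_0_nat by simp
  hence finQ: "finite (carrier (G Mod ?Z))" by (simp add: FactGroup_def card_ge_0_finite)
  have xQ: "?Z #> x \<in> carrier (G Mod ?Z)" using xy Zc by (simp add: FactGroup_def rcosetsI)
  have yQ: "?Z #> y \<in> carrier (G Mod ?Z)" using xy Zc by (simp add: FactGroup_def rcosetsI)
  have "(?Z #> x) \<otimes>\<^bsub>G Mod ?Z\<^esub> (?Z #> y) = (?Z #> y) \<otimes>\<^bsub>G Mod ?Z\<^esub> (?Z #> x)"
    by (rule group.comm_p2[OF QG finQ p ordQ xQ yQ])
  hence "?Z #> (x \<otimes> y) = ?Z #> (y \<otimes> x)" using xy by (simp add: FactGroup_def N.rcos_sum)
  moreover have "y \<otimes> x \<in> ?Z #> (y \<otimes> x)" using xy by (simp add: rcos_self center_sub)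
  ultimately have "y \<otimes> x \<in> ?Z #> (x \<otimes> y)" by simp
  hence "y \<otimes> x \<in> (\<Union>h\<in>?Z. {h \<otimes> (x \<otimes> y)})" by (simp only: r_coset_def)
  then obtain h where h: "h \<in> ?Z" "y \<otimes> x \<in> {h \<otimes> (x \<otimes> y)}" by (rule UN_E)
  hence h2: "y \<otimes> x = h \<otimes> (x \<otimes> y)" by simp
  have hc: "h \<in> carrier G" using h(1) Zc by blast
  have hcent: "\<forall>g\<in>carrier G. h \<otimes> g = g \<otimes> h" using h(1) unfolding group_center_def by blast
  have "h \<otimes> (x \<otimes> y) = x \<otimes> y \<otimes> h" by (rule hcent[rule_format]) (use xy in simp)
  hence yx: "y \<otimes> x = x \<otimes> y \<otimes> h" using h2 by simp
  have hne: "h \<noteq> \<one>"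
  proof
    assume "h = \<one>" hence "y \<otimes> x = x \<otimes> y" using yx xy by simp
    thus False using xy(3) by simp
  qed
  have "x \<in> carrier G \<and> y \<in> carrier G \<and> h \<in> carrier G \<and> (\<forall>g\<in>carrier G. h \<otimes> g = g \<otimes> h) \<and> h \<noteq> \<one> \<and> y \<otimes> x = x \<otimes> y \<otimes> h"
    using xy(1,2) hc hne yx by (intro conjI hcent) auto
  thus ?thesis by (intro exI)
qed



lemma (in monoid) lp_Nil [simp]: "list_prod G [] = \<one>" by (simp add: list_prod_def)
lemma (in monoid) lp_Cons [simp]: "list_prod G (a # l) = a \<otimes> list_prod G l" by (simp add: list_prod_def)
lemma (in monoid) lp_closed: "set l \<subseteq> carrier G \<Longrightarrow> list_prod G l \<in> carrier G"
  by (induction l) auto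
lemma (in monoid) lp_append:
  "set l1 \<subseteq> carrier G \<Longrightarrow> set l2 \<subseteq> carrier G \<Longrightarrow> list_prod G (l1 @ l2) = list_prod G l1 \<otimes> list_prod G l2"
  by (induction l1) (auto simp: m_assoc lp_closed)

context heis
begin

lemma lp_fwd:
  assumes co: "\<forall>i<n. xs!i = nf (A i) (B i) (C i)"
  shows "list_prod G (map (nth xs) (filter (\<lambda>i. i \<in> J) [0..<n])) =
    nf (\<Sum>i\<in>{i\<in>J. i<n}. A i) (\<Sum>i\<in>{i\<in>J. i<n}. B i)
       (\<Sum>j\<in>{i\<in>J. i<n}. C j + A j * (\<Sum>i\<in>{i\<in>{i\<in>J. i<n}. i<j}. B i))"
  using co
proof (induction n)
  case 0 thus ?case by (simp add: nf_def)
next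
  case (Suc n)
  let ?S = "{i\<in>J. i<n}"
  have IH: "list_prod G (map (nth xs) (filter (\<lambda>i. i \<in> J) [0..<n])) =
    nf (\<Sum>i\<in>?S. A i) (\<Sum>i\<in>?S. B i) (\<Sum>j\<in>?S. C j + A j * (\<Sum>i\<in>{i\<in>?S. i<j}. B i))"
    using Suc by simp
  have cl: "set (map (nth xs) (filter (\<lambda>i. i \<in> J) [0..<n])) \<subseteq> carrier G"
    using Suc.prems by auto
  show ?case
  proof (cases "n \<in> J")
    case False
    hence "{i\<in>J. i<Suc n} = ?S" by (auto simp: less_Suc_eq)
    thus ?thesis using IH False by simp
  next
    case True
    have S': "{i\<in>J. i<Suc n} = insert n ?S" using True by (auto simp: less_Suc_eq)
    have nS: "n \<notin> ?S" by simp
    have fin: "finite ?S" by simp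
    have xn: "xs!n = nf (A n) (B n) (C n)" using Suc.prems by simp
    have "list_prod G (map (nth xs) (filter (\<lambda>i. i \<in> J) [0..<Suc n]))
        = list_prod G (map (nth xs) (filter (\<lambda>i. i \<in> J) [0..<n])) \<otimes> list_prod G [xs!n]"
      using True cl xn by (simp add: lp_append)
    also have "\<dots> = nf (\<Sum>i\<in>?S. A i) (\<Sum>i\<in>?S. B i) (\<Sum>j\<in>?S. C j + A j * (\<Sum>i\<in>{i\<in>?S. i<j}. B i))
                 \<otimes> nf (A n) (B n) (C n)" using IH xn by simp
    also have "\<dots> = nf ((\<Sum>i\<in>?S. A i) + A n) ((\<Sum>i\<in>?S. B i) + B n)
        ((\<Sum>j\<in>?S. C j + A j * (\<Sum>i\<in>{i\<in>?S. i<j}. B i)) + C n + (\<Sum>i\<in>?S. B i) * A n)"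
      by (rule nf_mult)
    also have "\<dots> = nf (\<Sum>i\<in>insert n ?S. A i) (\<Sum>i\<in>insert n ?S. B i)
       (\<Sum>j\<in>insert n ?S. C j + A j * (\<Sum>i\<in>{i\<in>insert n ?S. i<j}. B i))"
    proof -
      have e1: "{i\<in>insert n ?S. i<n} = ?S" by auto
      have e2: "(\<Sum>j\<in>?S. C j + A j * (\<Sum>i\<in>{i\<in>insert n ?S. i<j}. B i)) = (\<Sum>j\<in>?S. C j + A j * (\<Sum>i\<in>{i\<in>?S. i<j}. B i))"
      proof (rule sum.cong[OF refl])
        fix j assume "j \<in> ?S"
        hence "{i\<in>insert n ?S. i<j} = {i\<in>?S. i<j}" by auto
        thus "C j + A j * (\<Sum>i\<in>{i\<in>insert n ?S. i<j}. B i) = C j + A j * (\<Sum>i\<in>{i\<in>?S. i<j}. B i)" by simp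
      qed
      show ?thesis using fin nS e1 e2 by (simp add: sum.insert algebra_simps)
    qed
    finally show ?thesis using S' by simp
  qed
qed

lemma lp_rev:
  assumes co: "\<forall>i<n. xs!i = nf (A i) (B i) (C i)"
  shows "list_prod G (rev (map (nth xs) (filter (\<lambda>i. i \<in> J) [0..<n]))) =
    nf (\<Sum>i\<in>{i\<in>J. i<n}. A i) (\<Sum>i\<in>{i\<in>J. i<n}. B i)
       (\<Sum>j\<in>{i\<in>J. i<n}. C j + B j * (\<Sum>i\<in>{i\<in>{i\<in>J. i<n}. i<j}. A i))"
  using co
proof (induction n)
  case 0 thus ?case by (simp add: nf_def)
next
  case (Suc n)
  let ?S = "{i\<in>J. i<n}"
  have IH: "list_prod G (rev (map (nth xs) (filter (\<lambda>i. i \<in> J) [0..<n]))) =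
    nf (\<Sum>i\<in>?S. A i) (\<Sum>i\<in>?S. B i) (\<Sum>j\<in>?S. C j + B j * (\<Sum>i\<in>{i\<in>?S. i<j}. A i))"
    using Suc by simp
  show ?case
  proof (cases "n \<in> J")
    case False
    hence "{i\<in>J. i<Suc n} = ?S" by (auto simp: less_Suc_eq)
    thus ?thesis using IH False by simp
  next
    case True
    have S': "{i\<in>J. i<Suc n} = insert n ?S" using True by (auto simp: less_Suc_eq)
    have nS: "n \<notin> ?S" by simp
    have fin: "finite ?S" by simp
    have xn: "xs!n = nf (A n) (B n) (C n)" using Suc.prems by simp
    have "list_prod G (rev (map (nth xs) (filter (\<lambda>i. i \<in> J) [0..<Suc n])))
        = xs!n \<otimes> list_prod G (rev (map (nth xs) (filter (\<lambda>i. i \<in> J) [0..<n])))"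
      using True by simp
    also have "\<dots> = nf (A n) (B n) (C n) \<otimes> nf (\<Sum>i\<in>?S. A i) (\<Sum>i\<in>?S. B i) (\<Sum>j\<in>?S. C j + B j * (\<Sum>i\<in>{i\<in>?S. i<j}. A i))"
      using IH xn by simp
    also have "\<dots> = nf (A n + (\<Sum>i\<in>?S. A i)) (B n + (\<Sum>i\<in>?S. B i))
        (C n + (\<Sum>j\<in>?S. C j + B j * (\<Sum>i\<in>{i\<in>?S. i<j}. A i)) + B n * (\<Sum>i\<in>?S. A i))"
      by (rule nf_mult)
    also have "\<dots> = nf (\<Sum>i\<in>insert n ?S. A i) (\<Sum>i\<in>insert n ?S. B i)
       (\<Sum>j\<in>insert n ?S. C j + B j * (\<Sum>i\<in>{i\<in>insert n ?S. i<j}. A i))"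
    proof -
      have e1: "{i\<in>insert n ?S. i<n} = ?S" by auto
      have e2: "(\<Sum>j\<in>?S. C j + B j * (\<Sum>i\<in>{i\<in>insert n ?S. i<j}. A i)) = (\<Sum>j\<in>?S. C j + B j * (\<Sum>i\<in>{i\<in>?S. i<j}. A i))"
      proof (rule sum.cong[OF refl])
        fix j assume "j \<in> ?S"
        hence "{i\<in>insert n ?S. i<j} = {i\<in>?S. i<j}" by auto
        thus "C j + B j * (\<Sum>i\<in>{i\<in>insert n ?S. i<j}. A i) = C j + B j * (\<Sum>i\<in>{i\<in>?S. i<j}. A i)" by simp
      qed
      show ?thesis using fin nS e1 e2 by (simp add: sum.insert algebra_simps)
    qed
    finally show ?thesis using S' by simp
  qed
qed

lemma lp_z: "list_prod G (map (\<lambda>i. z [^] (D i :: nat)) l) = z [^] (sum_list (map D l))"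
  by (induction l) (auto simp: nat_pow_mult zc)

lemma nf_one: "p dvd a \<Longrightarrow> p dvd b \<Longrightarrow> p dvd c \<Longrightarrow> nf a b c = \<one>"
  using xc yc zc by (simp add: nf_def pow_p_mult)

end



lemma mset_nth_filter_sub:
  "mset (map (nth xs) (filter P [0..<length xs])) \<subseteq># mset xs"
proof -
  have "mset (map (nth xs) (filter P [0..<length xs])) = image_mset (nth xs) (filter_mset P (mset [0..<length xs]))"
    by simp
  also have "\<dots> \<subseteq># image_mset (nth xs) (mset [0..<length xs])"
    by (intro image_mset_subseteq_mono multiset_filter_subset)
  also have "\<dots> = mset xs" by (metis map_nth mset_map)
  finally show ?thesis .
qed

lemma (in group) main_aux:
  assumes "prime p" and "odd p"
    and "order G = p ^ 3"
    and "\<exists>x \<in> carrier G. \<exists>y \<in> carrier G. x \<otimes> y \<noteq> y \<otimes> x"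
    and "\<forall>x \<in> carrier G. x [^] p = \<one>"
    and "set_mset S \<subseteq> carrier G"
    and "size S = 3 * p - 2"
    and "size (filter_mset (\<lambda>x. x \<in> group_center G) S) \<ge> p - 2"
  shows "\<exists>T. T \<subseteq># S \<and> product_one G T"
proof -
  note p = assms(1) and podd = assms(2) and ord = assms(3) and nc = assms(4)
    and expo = assms(5) and Sc = assms(6) and sz = assms(7) and csz = assms(8)
  have grp: "group G" by (rule is_group)
  have pos: "order G > 0" using ord p prime_gt_0_nat by simp
  have fin: "finite (carrier G)" using pos by (simp add: order_gt_0_iff_finite)
  obtain x y z where xyz: "x \<in> carrier G" "y \<in> carrier G" "z \<in> carrier G"
     "\<forall>g\<in>carrier G. z \<otimes> g = g \<otimes> z" "z \<noteq> \<one>" "y \<otimes> x = x \<otimes> y \<otimes> z"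
    using heis_exists[OF fin p ord nc] by blast
  have H: "heis G p x y z"
    unfolding heis_def heis_axioms_def using grp p fin ord xyz expo by auto
  interpret H: heis G p x y z by (rule H)
  let ?Z = "group_center G"
  define Sc where "Sc = filter_mset (\<lambda>g. g \<in> ?Z) S"
  define Sx where "Sx = filter_mset (\<lambda>g. g \<notin> ?Z) S"
  have SS: "S = Sc + Sx" unfolding Sc_def Sx_def by (rule multiset_partition)
  obtain cs where cs: "mset cs = Sc" using ex_mset by blast
  obtain xs where xs: "mset xs = Sx" using ex_mset by blast
  define k where "k = length cs"
  define nx where "nx = length xs"
  have kge: "p - 2 \<le> k" using csz cs by (simp add: k_def Sc_def flip: size_mset)
  have nk: "nx + k = 3 * p - 2" using sz SS cs xs by (simp add: k_def nx_def flip: size_mset)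
  have xs_c: "xs ! i \<in> carrier G" if "i < nx" for i
  proof -
    have "xs ! i \<in> set xs" using that by (simp add: nx_def)
    hence "xs ! i \<in> set_mset S" using xs SS by (simp flip: set_mset_mset)
    thus ?thesis using Sc by blast
  qed
  have cs_Z: "cs ! i \<in> ?Z" if "i < k" for i
  proof -
    have "cs ! i \<in> set cs" using that by (simp add: k_def)
    hence "cs ! i \<in> set_mset Sc" using cs by (simp flip: set_mset_mset)
    thus ?thesis by (simp add: Sc_def)
  qed
  have "\<forall>i. \<exists>t. i < nx \<longrightarrow> xs ! i = H.nf (fst t) (fst (snd t)) (snd (snd t))"
  proof
    fix i show "\<exists>t. i < nx \<longrightarrow> xs ! i = H.nf (fst t) (fst (snd t)) (snd (snd t))"
    proof (cases "i < nx")
      case True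
      then obtain a b c where "xs ! i = H.nf a b c" using H.nf_surj[OF xs_c[OF True]] by blast
      thus ?thesis by (intro exI[of _ "(a, b, c)"]) simp
    qed simp
  qed
  then obtain f where f: "\<And>i. i < nx \<Longrightarrow> xs ! i = H.nf (fst (f i)) (fst (snd (f i))) (snd (snd (f i)))"
    by metis
  define A where "A i = fst (f i)" for i
  define B where "B i = fst (snd (f i))" for i
  define C where "C i = snd (snd (f i))" for i
  have co: "\<forall>i<nx. xs ! i = H.nf (A i) (B i) (C i)" using f by (simp add: A_def B_def C_def)
  have "\<forall>i. \<exists>d::nat. i < k \<longrightarrow> cs ! i = z [^] d"
  proof
    fix i show "\<exists>d::nat. i < k \<longrightarrow> cs ! i = z [^] d"
    proof (cases "i < k")
      case True
      have "cs ! i \<in> carrier G" "\<And>h. h \<in> carrier G \<Longrightarrow> cs ! i \<otimes> h = h \<otimes> cs ! i"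
        using cs_Z[OF True] by (auto simp: group_center_def)
      then obtain d :: nat where "cs ! i = z [^] d" using H.central_nf by blast
      thus ?thesis by blast
    qed simp
  qed
  then obtain D where D: "\<And>i. i < k \<Longrightarrow> cs ! i = z [^] (D i :: nat)" by metis
  obtain J K where JK: "J \<subseteq> {..<nx}" "K \<subseteq> {..<k}" "J \<noteq> {} \<or> K \<noteq> {}"
    "int p dvd (\<Sum>i\<in>J. int (B i))" "int p dvd (\<Sum>i\<in>J. int (A i))"
    "int p dvd (\<Sum>j\<in>J. int (C j) + int (A j) * (\<Sum>i\<in>{i\<in>J. i<j}. int (B i))) + (\<Sum>j\<in>K. int (D j))
     \<or> int p dvd (\<Sum>j\<in>J. int (C j) + int (B j) * (\<Sum>i\<in>{i\<in>J. i<j}. int (A i))) + (\<Sum>j\<in>K. int (D j))"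
    using core[OF p podd nk kge, of "\<lambda>i. int (B i)" "\<lambda>i. int (A i)" "\<lambda>i. int (C i)" "\<lambda>i. int (D i)"] by blast
  have JS: "{i\<in>J. i<nx} = J" using JK(1) by auto
  define Ix where "Ix = filter (\<lambda>i. i \<in> J) [0..<nx]"
  define Ik where "Ik = filter (\<lambda>i. i \<in> K) [0..<k]"
  define Lx where "Lx = map (nth xs) Ix"
  define Lc where "Lc = map (nth cs) Ik"
  have Lc_eq: "Lc = map (\<lambda>i. z [^] (D i)) Ik" unfolding Lc_def Ik_def using D by (intro map_cong) auto
  have prodc: "list_prod G Lc = z [^] (\<Sum>i\<in>K. D i)"
  proof -
    have "sum_list (map D Ik) = (\<Sum>i\<in>set Ik. D i)" by (simp add: Ik_def sum_list_distinct_conv_sum_set)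
    moreover have "set Ik = K" using JK(2) by (auto simp: Ik_def)
    ultimately show ?thesis using Lc_eq H.lp_z[of D Ik] by simp
  qed
  have Lx_c: "set Lx \<subseteq> carrier G" using xs_c by (auto simp: Lx_def Ix_def)
  have Lc_c: "set Lc \<subseteq> carrier G" using Lc_eq H.zc by auto
  have sub: "mset Lx + mset Lc \<subseteq># S"
  proof -
    have "mset Lx \<subseteq># mset xs" unfolding Lx_def Ix_def nx_def by (rule mset_nth_filter_sub)
    moreover have "mset Lc \<subseteq># mset cs" unfolding Lc_def Ik_def k_def by (rule mset_nth_filter_sub)
    ultimately show ?thesis using SS cs xs by (simp add: subset_mset.add_mono add.commute)
  qed
  have ne: "mset Lx + mset Lc \<noteq> {#}"
  proof -
    from JK(3) have "Lx \<noteq> [] \<or> Lc \<noteq> []"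
    proof
      assume "J \<noteq> {}" then obtain j where "j \<in> J" by blast
      hence "j \<in> set Ix" using JK(1) by (auto simp: Ix_def)
      thus ?thesis by (auto simp: Lx_def)
    next
      assume "K \<noteq> {}" then obtain j where "j \<in> K" by blast
      hence "j \<in> set Ik" using JK(2) by (auto simp: Ik_def)
      thus ?thesis by (auto simp: Lc_def)
    qed
    thus ?thesis by auto
  qed
  have dA: "p dvd (\<Sum>i\<in>J. A i)" using JK(5) by (simp flip: of_nat_sum)
  have dB: "p dvd (\<Sum>i\<in>J. B i)" using JK(4) by (simp flip: of_nat_sum)
  from JK(6) show ?thesis
  proof
    assume dC: "int p dvd (\<Sum>j\<in>J. int (C j) + int (A j) * (\<Sum>i\<in>{i\<in>J. i<j}. int (B i))) + (\<Sum>j\<in>K. int (D j))"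
    have "int ((\<Sum>j\<in>J. C j + A j * (\<Sum>i\<in>{i\<in>J. i<j}. B i)) + (\<Sum>j\<in>K. D j))
       = (\<Sum>j\<in>J. int (C j) + int (A j) * (\<Sum>i\<in>{i\<in>J. i<j}. int (B i))) + (\<Sum>j\<in>K. int (D j))"
      by (simp add: of_nat_sum)
    hence dC': "p dvd (\<Sum>j\<in>J. C j + A j * (\<Sum>i\<in>{i\<in>J. i<j}. B i)) + (\<Sum>j\<in>K. D j)"
      using dC by (metis int_dvd_int_iff)
    have "list_prod G (Lx @ Lc) = list_prod G Lx \<otimes> list_prod G Lc" using Lx_c Lc_c by (rule lp_append)
    also have "list_prod G Lx = H.nf (\<Sum>i\<in>J. A i) (\<Sum>i\<in>J. B i) (\<Sum>j\<in>J. C j + A j * (\<Sum>i\<in>{i\<in>J. i<j}. B i))"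
      using H.lp_fwd[OF co, of J] JS unfolding Lx_def Ix_def by simp
    finally have "list_prod G (Lx @ Lc) = H.nf (\<Sum>i\<in>J. A i) (\<Sum>i\<in>J. B i)
        ((\<Sum>j\<in>J. C j + A j * (\<Sum>i\<in>{i\<in>J. i<j}. B i)) + (\<Sum>j\<in>K. D j))"
      using prodc H.nf_z by simp
    also have "\<dots> = \<one>" using dA dB dC' by (rule H.nf_one)
    finally have "list_prod G (Lx @ Lc) = \<one>" .
    moreover have "mset (Lx @ Lc) = mset Lx + mset Lc" by simp
    ultimately have "product_one G (mset Lx + mset Lc)" using ne unfolding product_one_def by metis
    thus ?thesis using sub by blast
  next
    assume dC: "int p dvd (\<Sum>j\<in>J. int (C j) + int (B j) * (\<Sum>i\<in>{i\<in>J. i<j}. int (A i))) + (\<Sum>j\<in>K. int (D j))"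
    have "int ((\<Sum>j\<in>J. C j + B j * (\<Sum>i\<in>{i\<in>J. i<j}. A i)) + (\<Sum>j\<in>K. D j))
       = (\<Sum>j\<in>J. int (C j) + int (B j) * (\<Sum>i\<in>{i\<in>J. i<j}. int (A i))) + (\<Sum>j\<in>K. int (D j))"
      by (simp add: of_nat_sum)
    hence dC': "p dvd (\<Sum>j\<in>J. C j + B j * (\<Sum>i\<in>{i\<in>J. i<j}. A i)) + (\<Sum>j\<in>K. D j)"
      using dC by (metis int_dvd_int_iff)
    have "list_prod G (rev Lx @ Lc) = list_prod G (rev Lx) \<otimes> list_prod G Lc" using Lx_c Lc_c by (intro lp_append) auto
    also have "list_prod G (rev Lx) = H.nf (\<Sum>i\<in>J. A i) (\<Sum>i\<in>J. B i) (\<Sum>j\<in>J. C j + B j * (\<Sum>i\<in>{i\<in>J. i<j}. A i))"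
      using H.lp_rev[OF co, of J] JS unfolding Lx_def Ix_def by simp
    finally have "list_prod G (rev Lx @ Lc) = H.nf (\<Sum>i\<in>J. A i) (\<Sum>i\<in>J. B i)
        ((\<Sum>j\<in>J. C j + B j * (\<Sum>i\<in>{i\<in>J. i<j}. A i)) + (\<Sum>j\<in>K. D j))"
      using prodc H.nf_z by simp
    also have "\<dots> = \<one>" using dA dB dC' by (rule H.nf_one)
    finally have "list_prod G (rev Lx @ Lc) = \<one>" .
    moreover have "mset (rev Lx @ Lc) = mset Lx + mset Lc" by simp
    ultimately have "product_one G (mset Lx + mset Lc)" using ne unfolding product_one_def by metis
    thus ?thesis using sub by blast
  qed
qed


theorem theorem2p6:
  fixes G :: "('a, 'b) monoid_scheme" and p :: nat and S :: "'a multiset"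
  assumes "prime p" and "odd p"
    and "group G"
    and "order G = p ^ 3"
    and "\<exists>x \<in> carrier G. \<exists>y \<in> carrier G. x \<otimes>\<^bsub>G\<^esub> y \<noteq> y \<otimes>\<^bsub>G\<^esub> x"
    and "\<forall>x \<in> carrier G. x [^]\<^bsub>G\<^esub> p = \<one>\<^bsub>G\<^esub>"
    and "set_mset S \<subseteq> carrier G"
    and "size S = 3 * p - 2"
    and "size (filter_mset (\<lambda>x. x \<in> group_center G) S) \<ge> p - 2"
  shows "\<exists>T. T \<subseteq># S \<and> product_one G T"
  by (rule group.main_aux[OF assms(3) assms(1,2) assms(4-9)])


end
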